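(* Let $p>2$ be prime, $u\in\mathbb{F}_p^*$ a non-square, $T'=\{\begin{pmatrix}a&bu\\ b&a\end{pmatrix}: a,b\in\mathbb{F}_p,\ a^2-ub^2\neq 0\}\subset {\rm GL}_2(\mathbb{F}_p)$, $Z$ the subgroup of scalar matrices, and $w=\begin{pmatrix}0&-1\\1&0\end{pmatrix}$. Then in the group ring $\mathbb{Q}[{\rm PGL}_2(\mathbb{F}_p)]$ the $T'$-trace element $\sum_{M\in T'/Z}M$ is equal to $${\rm id}+\sum_{r\in\mathbb{F}_p}\begin{pmatrix}1&r\\0&1\end{pmatrix}w\begin{pmatrix}1&r\\0&r^2-u\end{pmatrix}.$$
   Context: Matrices are viewed via their images in ${\rm PGL}_2(\mathbb{F}_p)={\rm GL}_2(\mathbb{F}_p)/Z$. *)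

theory Defs
  imports "HOL-Number_Theory.Number_Theory" "HOL-Library.Function_Algebras"
begin

text \<open>Elements of F_p are represented by integers in {0..<p}.
  A 2x2 matrix [[a,b],[c,d]] over F_p is the tuple (a,b,c,d).\<close>

type_synonym mat2 = "int \<times> int \<times> int \<times> int"

definition mat_of :: "int \<Rightarrow> int \<Rightarrow> int \<Rightarrow> int \<Rightarrow> int \<Rightarrow> mat2" where
  "mat_of p a b c d = (a mod p, b mod p, c mod p, d mod p)"

fun mat_mult :: "int \<Rightarrow> mat2 \<Rightarrow> mat2 \<Rightarrow> mat2" where
  "mat_mult p (a, b, c, d) (e, f, g, h) =
     mat_of p (a*e + b*g) (a*f + b*h) (c*e + d*g) (c*f + d*h)"

fun mat_smult :: "int \<Rightarrow> int \<Rightarrow> mat2 \<Rightarrow> mat2" where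
  "mat_smult p s (a, b, c, d) = mat_of p (s*a) (s*b) (s*c) (s*d)"

definition GL2 :: "int \<Rightarrow> mat2 set" where
  "GL2 p = {(a, b, c, d). a \<in> {0..<p} \<and> b \<in> {0..<p} \<and> c \<in> {0..<p} \<and> d \<in> {0..<p}
                          \<and> (a*d - b*c) mod p \<noteq> 0}"

definition pgl_class :: "int \<Rightarrow> mat2 \<Rightarrow> mat2 set" where
  "pgl_class p M = {N. \<exists>s\<in>{1..<p}. N = mat_smult p s M}"

definition PGL2 :: "int \<Rightarrow> mat2 set set" where
  "PGL2 p = pgl_class p ` GL2 p"

definition Tprime :: "int \<Rightarrow> int \<Rightarrow> mat2 set" where
  "Tprime p u = {mat_of p a (b*u) b a | a b. a \<in> {0..<p} \<and> b \<in> {0..<p} \<and> (a^2 - u*b^2) mod p \<noteq> 0}"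

text \<open>Group ring Q[G]: finitely supported functions G \<Rightarrow> Q (G finite here), with
  pointwise addition; a group element g is the basis element delta_g.\<close>
type_synonym 'g group_ring = "'g \<Rightarrow> rat"

definition gr_basis :: "'g \<Rightarrow> 'g group_ring" where
  "gr_basis g = (\<lambda>x. if x = g then 1 else 0)"

end

theory Submission
  imports Defs
begin

lemma mat_of_cong:
  assumes "[a = a'] (mod p)" "[b = b'] (mod p)" "[c = c'] (mod p)" "[d = d'] (mod p)"
  shows "mat_of p a b c d = mat_of p a' b' c' d'"
  using assms by (simp add: mat_of_def cong_def)

lemma smult_mat_of:
  "mat_smult p s (mat_of p a b c d) = mat_of p (s*a) (s*b) (s*c) (s*d)"
  by (simp add: mat_of_def mod_mult_right_eq)

lemma inv_ex:
  fixes p t :: int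
  assumes "prime p" "\<not> p dvd t"
  shows "\<exists>t'. [t * t' = 1] (mod p)"
proof -
  have "coprime p t" using assms prime_imp_coprime by blast
  then have "coprime t p" by (simp add: coprime_commute)
  then show ?thesis using cong_solve_coprime_int by blast
qed

lemma nz_range:
  fixes p s :: int
  assumes "prime p" "\<not> p dvd s"
  shows "s mod p \<in> {1..<p}"
proof -
  have "p > 0" using assms prime_gt_0_int by blast
  moreover have "s mod p \<noteq> 0" using assms by (simp add: dvd_eq_mod_eq_0)
  ultimately show ?thesis
  proof -
    have "0 \<le> s mod p" "s mod p < p" using \<open>p > 0\<close> by auto
    then show ?thesis using \<open>s mod p \<noteq> 0\<close> by auto
  qed
qed

lemma range_ndvd:
  fixes p s :: int
  assumes "s \<in> {1..<p}"
  shows "\<not> p dvd s"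
  using assms zdvd_not_zless by auto

lemma cls_smult:
  fixes p t :: int
  assumes "prime p" "\<not> p dvd t"
  shows "pgl_class p (mat_smult p t (a,b,c,d)) = pgl_class p (a,b,c,d)"
proof -
  obtain t' where t': "[t * t' = 1] (mod p)" using inv_ex assms by blast
  have pt': "\<not> p dvd t'"
    by (metis assms(1) cong_dvd_iff dvd_mult not_prime_unit t')
  show ?thesis
  proof
    show "pgl_class p (mat_smult p t (a, b, c, d)) \<subseteq> pgl_class p (a, b, c, d)"
    proof
      fix N assume "N \<in> pgl_class p (mat_smult p t (a, b, c, d))"
      then obtain s where s: "s \<in> {1..<p}" "N = mat_smult p s (mat_smult p t (a, b, c, d))"
        unfolding pgl_class_def by auto
      have ns: "\<not> p dvd (s*t)" using s(1) range_ndvd assms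
        by (simp add: prime_dvd_mult_iff)
      have "N = mat_smult p ((s*t) mod p) (a,b,c,d)"
        using s(2) by (simp add: mat_of_def mod_mult_right_eq mod_mult_left_eq mult.assoc)
      then show "N \<in> pgl_class p (a, b, c, d)"
        unfolding pgl_class_def using nz_range[OF assms(1) ns] by blast
    qed
  next
    show "pgl_class p (a, b, c, d) \<subseteq> pgl_class p (mat_smult p t (a, b, c, d))"
    proof
      fix N assume "N \<in> pgl_class p (a, b, c, d)"
      then obtain s where s: "s \<in> {1..<p}" "N = mat_smult p s (a, b, c, d)"
        unfolding pgl_class_def by auto
      have ns: "\<not> p dvd (s*t')" using s(1) range_ndvd pt' assms
        by (simp add: prime_dvd_mult_iff)
      have c: "[(s*t') * t = s] (mod p)"
        using t' by (metis cong_scalar_left mult.assoc mult.commute mult.right_neutral)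
      have key: "(s*t' mod p)*t*x mod p = s*x mod p" for x
      proof -
        have "(s*t' mod p)*t*x mod p = ((s*t'*t) mod p)*x mod p"
          by (metis mod_mult_left_eq mult.assoc)
        also have "\<dots> = (s mod p) * x mod p" using c by (simp add: cong_def)
        also have "\<dots> = s*x mod p" by (simp add: mod_mult_left_eq)
        finally show ?thesis .
      qed
      have "N = mat_smult p ((s*t') mod p) (mat_smult p t (a, b, c, d))"
        using s(2)
        by (simp add: mat_of_def mod_mult_right_eq key mult.assoc[symmetric])
      then show "N \<in> pgl_class p (mat_smult p t (a, b, c, d))"
        unfolding pgl_class_def using nz_range[OF assms(1) ns] by blast
    qed
  qed
qed

lemma cls_smult':
  fixes p t :: int
  assumes "prime p" "\<not> p dvd t"
  shows "pgl_class p (mat_smult p t M) = pgl_class p M"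
  using cls_smult[OF assms] by (cases M) auto

lemma self_in:
  assumes "p > 1"
  shows "mat_of p a b c d \<in> pgl_class p (mat_of p a b c d)"
proof -
  have "mat_of p a b c d = mat_smult p 1 (mat_of p a b c d)" by (simp add: smult_mat_of)
  then show ?thesis unfolding pgl_class_def using assms by force
qed

lemma prod_eq:
  fixes p r u :: int
  assumes "p > 1"
  shows "mat_mult p (mat_mult p (mat_of p 1 r 0 1) (mat_of p 0 (-1) 1 0)) (mat_of p 1 r 0 (r^2 - u))
    = mat_of p r u 1 r"
proof -
  have e: "(r mod p * (r mod p) + - 1 mod p * ((r * r - u) mod p)) mod p = (r*r + (-1)*(r*r-u)) mod p"
    by (metis mod_add_eq mod_mult_eq)
  show ?thesis
  using assms
  apply (simp add: mat_of_def)
  apply (simp add: mod_simps power2_eq_square algebra_simps)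
  apply (subst e)
  apply simp
  done
qed

theorem proposition2p2:
  fixes p u :: int
  assumes "prime p" and "p > 2"
    and "u \<in> {1..<p}" and "\<not> QuadRes p u"
  shows "(\<Sum>C \<in> pgl_class p ` Tprime p u. gr_basis C)
       = gr_basis (pgl_class p (mat_of p 1 0 0 1))
         + (\<Sum>r\<in>{0..<p}. gr_basis (pgl_class p
              (mat_mult p (mat_mult p (mat_of p 1 r 0 1) (mat_of p 0 (-1) 1 0))
                          (mat_of p 1 r 0 (r^2 - u)))))"
proof -
  define I where "I = pgl_class p (mat_of p 1 0 0 1)"
  define C where "C = (\<lambda>r. pgl_class p (mat_of p r u 1 r))"
  have p1: "p > 1" using assms by auto
  have nI: "I \<notin> C ` {0..<p}"
  proof
    assume "I \<in> C ` {0..<p}"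
    then obtain r where r: "r \<in> {0..<p}" "I = C r" by auto
    have "mat_of p 1 0 0 1 \<in> C r" using r self_in[OF p1] unfolding I_def by metis
    then obtain s where s: "s \<in> {1..<p}" "mat_of p 1 0 0 1 = mat_smult p s (mat_of p r u 1 r)"
      unfolding C_def pgl_class_def by auto
    then have "s mod p = 0" by (simp add: smult_mat_of mat_of_def)
    then show False using s(1) by auto
  qed
  have inj: "inj_on C {0..<p}"
  proof
    fix r r' assume r: "r \<in> {0..<p}" and r': "r' \<in> {0..<p}" and e: "C r = C r'"
    have "mat_of p r u 1 r \<in> C r'" using e self_in[OF p1] unfolding C_def by metis
    then obtain s where s: "s \<in> {1..<p}" "mat_of p r u 1 r = mat_smult p s (mat_of p r' u 1 r')"
      unfolding C_def pgl_class_def by auto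
    then have "s mod p = 1 mod p" "r mod p = s * r' mod p" by (simp_all add: smult_mat_of mat_of_def)
    then have "s = 1" "r = r'" using s(1) r r' p1 by auto
    then show "r = r'" by simp
  qed
  have p0: "p > 0" using p1 by simp
  have S: "pgl_class p ` Tprime p u = insert I (C ` {0..<p})"
  proof
    show "pgl_class p ` Tprime p u \<subseteq> insert I (C ` {0..<p})"
    proof
      fix X assume "X \<in> pgl_class p ` Tprime p u"
      then obtain a b where ab: "a \<in> {0..<p}" "b \<in> {0..<p}" "(a^2 - u*b^2) mod p \<noteq> 0"
        and X: "X = pgl_class p (mat_of p a (b*u) b a)"
        unfolding Tprime_def by blast
      show "X \<in> insert I (C ` {0..<p})"
      proof (cases "b = 0")
        case True
        then have "\<not> p dvd a^2" using ab(3) by (simp add: dvd_eq_mod_eq_0)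
        then have na: "\<not> p dvd a" by (metis dvd_mult2 power2_eq_square)
        have "mat_of p a (b*u) b a = mat_smult p a (mat_of p 1 0 0 1)"
          using True by (simp add: smult_mat_of)
        then have "X = I" unfolding X I_def using cls_smult'[OF assms(1) na] by simp
        then show ?thesis by simp
      next
        case False
        then have nb: "\<not> p dvd b" using ab(2) range_ndvd by auto
        obtain b' where b': "[b * b' = 1] (mod p)" using inv_ex[OF assms(1) nb] by blast
        define r where "r = a*b' mod p"
        have r: "r \<in> {0..<p}" unfolding r_def using p0 by simp
        have c1: "[b*r = a] (mod p)"
        proof -
          have "[b*r = b*(a*b')] (mod p)" unfolding r_def by (simp add: cong_def mod_mult_right_eq)
          moreover have "[b*(a*b') = a*1] (mod p)"
            using b' by (metis cong_scalar_left mult.left_commute)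
          ultimately show ?thesis by (metis cong_trans mult.right_neutral)
        qed
        have "mat_of p a (b*u) b a = mat_smult p b (mat_of p r u 1 r)"
          unfolding smult_mat_of using c1
          by (intro mat_of_cong) (auto simp: cong_sym)
        then have "X = C r" unfolding X C_def using cls_smult'[OF assms(1) nb] by simp
        then show ?thesis using r by simp
      qed
    qed
  next
    show "insert I (C ` {0..<p}) \<subseteq> pgl_class p ` Tprime p u"
    proof
      fix X assume X: "X \<in> insert I (C ` {0..<p})"
      show "X \<in> pgl_class p ` Tprime p u"
      proof (cases "X = I")
        case True
        have "(1::int) \<in> {0..<p}" "(0::int) \<in> {0..<p}" "((1::int)^2 - u*0^2) mod p \<noteq> 0"
          using p1 by auto
        then have "mat_of p 1 (0*u) 0 1 \<in> Tprime p u"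
          unfolding Tprime_def mem_Collect_eq by blast
        then show ?thesis unfolding True I_def by force
      next
        case False
        then obtain r where r: "r \<in> {0..<p}" "X = C r" using X by blast
        have "(r^2 - u*1^2) mod p \<noteq> 0"
        proof
          assume "(r^2 - u*1^2) mod p = 0"
          then have "[r^2 = u] (mod p)" by (simp add: cong_iff_dvd_diff dvd_eq_mod_eq_0)
          then show False using assms(4) unfolding QuadRes_def by blast
        qed
        then have "mat_of p r (1*u) 1 r \<in> Tprime p u"
          unfolding Tprime_def mem_Collect_eq using r(1) p1
          by (intro exI[of _ r] exI[of _ 1]) auto
        then show ?thesis unfolding r C_def by force
      qed
    qed
  qed
  have "(\<Sum>C \<in> pgl_class p ` Tprime p u. gr_basis C) = gr_basis I + (\<Sum>r\<in>{0..<p}. gr_basis (C r))"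
    unfolding S using nI inj by (simp add: sum.reindex)
  also have "\<dots> = gr_basis (pgl_class p (mat_of p 1 0 0 1))
         + (\<Sum>r\<in>{0..<p}. gr_basis (pgl_class p
              (mat_mult p (mat_mult p (mat_of p 1 r 0 1) (mat_of p 0 (-1) 1 0))
                          (mat_of p 1 r 0 (r^2 - u)))))"
    unfolding I_def C_def using prod_eq[OF p1] by simp
  finally show ?thesis .
qed

end
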